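(* Let $G$, $P$, $w$ be as in the context and let $s,t\in V$, $s\ne t$, with at least one directed path from $s$ to $t$ in $G$. For $m\in V\setminus\{t\}$ consider $\lim_{\alpha\to0^+}F^{\{t,\overline{o}\}}_{sm}(\alpha)$ in the evaporating network $G_\alpha$. Then: (a) if $\lim_{\alpha\to0^+}F^{\{t,\overline{o}\}}_{sm}(\alpha)=0$, no shortest (minimum-cost) path from $s$ to $t$ passes through $m$; (b) if $\lim_{\alpha\to0^+}F^{\{t,\overline{o}\}}_{sm}(\alpha)=1$, $m$ lies on every shortest path from $s$ to $t$; (c) if $0<\lim_{\alpha\to0^+}F^{\{t,\overline{o}\}}_{sm}(\alpha)<1$, $m$ lies on at least one but not all shortest paths from $s$ to $t$; (d) there is more than one shortest path from $s$ to $t$ if and only if there exists $m$ with $0<\lim_{\alpha\to0^+}F^{\{t,\overline{o}\}}_{sm}(\alpha)<1$.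
   Context: $G=(V,E)$ is a finite directed graph; each edge $e_{ij}\in E$ has a positive cost $w_{ij}$. $P$ is a row-stochastic transition matrix with $P_{ij}>0$ iff $e_{ij}\in E$. Shortest paths are directed paths of minimum total cost. Evaporating network $G_\alpha$ ($0<\alpha<1$): Markov chain on $V\cup\{o\}$ with $P_{ij}(\alpha)=P_{ij}\alpha^{w_{ij}}$ ($i,j\in V$), $P_{io}(\alpha)=1-\sum_jP_{ij}\alpha^{w_{ij}}$, $o$ absorbing. Making $t$ and $o$ absorbing, with $\mathcal T=V\setminus\{t\}$, let $Q_x^{\{t,\overline o\}}(\alpha)$ be the probability that the chain from $x$ is absorbed at $t$, and $F^{\{t,o\}}(\alpha)=(I-P(\alpha)_{\mathcal T\mathcal T})^{-1}$. The avoidance fundamental matrix is $F^{\{t,\overline{o}\}}_{sm}(\alpha)=F^{\{t,o\}}_{sm}(\alpha)\,Q_m^{\{t,\overline o\}}(\alpha)/Q_s^{\{t,\overline o\}}(\alpha)$ for $s,m\in\mathcal T$ (the expected number of visits to $m$ from $s$ conditioned on absorption at $t$). *)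

theory Defs
  imports "HOL-Analysis.Analysis"
begin

definition Palpha :: "('v \<Rightarrow> 'v \<Rightarrow> real) \<Rightarrow> ('v \<Rightarrow> 'v \<Rightarrow> real) \<Rightarrow> real \<Rightarrow> 'v \<Rightarrow> 'v \<Rightarrow> real" where
  "Palpha P w \<alpha> i j = P i j * \<alpha> powr (w i j)"

text \<open>Transient block P(alpha)_TT, embedded into a 'v x 'v matrix with zero row/column at t.\<close>
definition Mtrans :: "('v::finite \<Rightarrow> 'v \<Rightarrow> real) \<Rightarrow> ('v \<Rightarrow> 'v \<Rightarrow> real) \<Rightarrow> 'v \<Rightarrow> real \<Rightarrow> real^'v^'v" where
  "Mtrans P w t \<alpha> = (\<chi> i j. if i \<noteq> t \<and> j \<noteq> t then Palpha P w \<alpha> i j else 0)"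

text \<open>Fundamental matrix F^{t,o}(alpha) = (I - P(alpha)_TT)^{-1} (entries for s,m distinct from t).\<close>
definition Fto :: "('v::finite \<Rightarrow> 'v \<Rightarrow> real) \<Rightarrow> ('v \<Rightarrow> 'v \<Rightarrow> real) \<Rightarrow> 'v \<Rightarrow> real \<Rightarrow> 'v \<Rightarrow> 'v \<Rightarrow> real" where
  "Fto P w t \<alpha> s m = matrix_inv (mat 1 - Mtrans P w t \<alpha>) $ s $ m"

text \<open>Absorption probability at t starting from x (x distinct from t): (F R)_{x t}.\<close>
definition Qabs :: "('v::finite \<Rightarrow> 'v \<Rightarrow> real) \<Rightarrow> ('v \<Rightarrow> 'v \<Rightarrow> real) \<Rightarrow> 'v \<Rightarrow> real \<Rightarrow> 'v \<Rightarrow> real" where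
  "Qabs P w t \<alpha> x = (\<Sum>m\<in>UNIV - {t}. Fto P w t \<alpha> x m * Palpha P w \<alpha> m t)"

definition Favoid :: "('v::finite \<Rightarrow> 'v \<Rightarrow> real) \<Rightarrow> ('v \<Rightarrow> 'v \<Rightarrow> real) \<Rightarrow> 'v \<Rightarrow> real \<Rightarrow> 'v \<Rightarrow> 'v \<Rightarrow> real" where
  "Favoid P w t \<alpha> s m = Fto P w t \<alpha> s m * Qabs P w t \<alpha> m / Qabs P w t \<alpha> s"

definition is_path :: "('v \<times> 'v) set \<Rightarrow> 'v \<Rightarrow> 'v \<Rightarrow> 'v list \<Rightarrow> bool" where
  "is_path E s t xs \<longleftrightarrow> xs \<noteq> [] \<and> hd xs = s \<and> last xs = t \<and> distinct xs \<and>
     successively (\<lambda>a b. (a, b) \<in> E) xs"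

definition path_cost :: "('v \<Rightarrow> 'v \<Rightarrow> real) \<Rightarrow> 'v list \<Rightarrow> real" where
  "path_cost w xs = sum_list (map (\<lambda>(a, b). w a b) (zip xs (tl xs)))"

definition shortest_path :: "('v \<times> 'v) set \<Rightarrow> ('v \<Rightarrow> 'v \<Rightarrow> real) \<Rightarrow> 'v \<Rightarrow> 'v \<Rightarrow> 'v list \<Rightarrow> bool" where
  "shortest_path E w s t xs \<longleftrightarrow> is_path E s t xs \<and>
     (\<forall>ys. is_path E s t ys \<longrightarrow> path_cost w xs \<le> path_cost w ys)"

end

theory Submission
  imports Defs
begin


definition edges :: "'a list \<Rightarrow> ('a \<times> 'a) list" where
  "edges xs = zip xs (tl xs)"

lemma edges_simps[simp]:
  "edges [] = []" "edges [x] = []" "edges (x # y # r) = (x, y) # edges (y # r)"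
  by (simp_all add: edges_def)

lemma edges_glue:
  assumes "xs \<noteq> []" "ys \<noteq> []" "last xs = hd ys"
  shows "edges (xs @ tl ys) = edges xs @ edges ys"
  using assms
proof (induction xs rule: induct_list012)
  case (2 x)
  then show ?case by (cases ys; cases "tl ys") auto
next
  case (3 x y zs)
  then show ?case by simp
qed simp

lemma path_cost_edges: "path_cost w xs = sum_list (map (\<lambda>(a, b). w a b) (edges xs))"
  by (simp add: path_cost_def edges_def)

lemma successively_edges:
  "successively R xs \<longleftrightarrow> (\<forall>(a, b)\<in>set (edges xs). R a b)"
  by (induction xs rule: induct_list012) auto

lemma length_edges[simp]: "length (edges xs) = length xs - 1"
  by (simp add: edges_def)



locale ctx =
  fixes E :: "('v::finite \<times> 'v) set"
    and P w :: "'v \<Rightarrow> 'v \<Rightarrow> real"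
    and s t :: 'v
  assumes P_nonneg: "\<And>i j. P i j \<ge> 0"
    and P_stoch: "\<And>i. (\<Sum>j\<in>UNIV. P i j) = 1"
    and P_edge: "\<And>i j. P i j > 0 \<longleftrightarrow> (i, j) \<in> E"
    and w_pos: "\<And>i j. (i, j) \<in> E \<Longrightarrow> w i j > 0"
    and st: "s \<noteq> t"
    and reach: "\<exists>xs. is_path E s t xs"
begin

definition W :: "'v list \<Rightarrow> bool" where
  "W xs \<longleftrightarrow> xs \<noteq> [] \<and> (\<forall>(a, b)\<in>set (edges xs). (a, b) \<in> E)"

lemma cost_nonneg: "W xs \<Longrightarrow> path_cost w xs \<ge> 0"
  unfolding path_cost_edges W_def
  by (rule sum_list_nonneg) (auto dest: w_pos intro: less_imp_le)

lemma cost_pos: "W xs \<Longrightarrow> length xs \<ge> 2 \<Longrightarrow> path_cost w xs > 0"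
proof -
  assume a: "W xs" "length xs \<ge> 2"
  then obtain x y r where xs: "xs = x # y # r"
    by (metis One_nat_def Suc_1 Suc_le_length_iff le_Suc_eq)
  have "W (y # r)" using a(1) unfolding W_def xs by auto
  hence "path_cost w (y # r) \<ge> 0" by (rule cost_nonneg)
  moreover have "w x y > 0" using a(1) unfolding W_def xs by (auto intro: w_pos)
  ultimately show ?thesis unfolding xs by (simp add: path_cost_def)
qed

lemma W_append3:
  assumes "W (as @ [y] @ bs @ [y] @ cs)"
  shows "W (as @ [y] @ cs)" "W (y # bs @ [y])"
    "path_cost w (as @ [y] @ bs @ [y] @ cs) = path_cost w (as @ [y] @ cs) + path_cost w (y # bs @ [y])"
proof -
  have e1: "edges (as @ [y] @ bs @ [y] @ cs) = edges (as @ [y]) @ edges (y # bs @ [y]) @ edges (y # cs)"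
  proof -
    have "as @ [y] @ bs @ [y] @ cs = ((as @ [y]) @ tl (y # bs @ [y])) @ tl (y # cs)" by simp
    also have "edges \<dots> = edges ((as @ [y]) @ tl (y # bs @ [y])) @ edges (y # cs)"
      by (rule edges_glue) auto
    also have "edges ((as @ [y]) @ tl (y # bs @ [y])) = edges (as @ [y]) @ edges (y # bs @ [y])"
      by (rule edges_glue) auto
    finally show ?thesis by simp
  qed
  have e2: "edges (as @ [y] @ cs) = edges (as @ [y]) @ edges (y # cs)"
  proof -
    have "as @ [y] @ cs = (as @ [y]) @ tl (y # cs)" by simp
    also have "edges \<dots> = edges (as @ [y]) @ edges (y # cs)"
      by (rule edges_glue) auto
    finally show ?thesis .
  qed
  show "W (as @ [y] @ cs)" using assms unfolding W_def e1 e2 by auto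
  show "W (y # bs @ [y])" using assms unfolding W_def e1 by auto
  show "path_cost w (as @ [y] @ bs @ [y] @ cs) = path_cost w (as @ [y] @ cs) + path_cost w (y # bs @ [y])"
    unfolding path_cost_edges e1 e2 by simp
qed

lemma walk_to_path:
  "W xs \<Longrightarrow> \<exists>p. is_path E (hd xs) (last xs) p \<and> path_cost w p \<le> path_cost w xs \<and>
      (\<not> distinct xs \<longrightarrow> path_cost w p < path_cost w xs)"
proof (induction "length xs" arbitrary: xs rule: less_induct)
  case less
  show ?case
  proof (cases "distinct xs")
    case True
    then show ?thesis using less.prems
      by (intro exI[of _ xs]) (auto simp: is_path_def W_def successively_edges)
  next
    case False
    then obtain as y bs cs where xs: "xs = as @ [y] @ bs @ [y] @ cs"
      using not_distinct_decomp by blast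
    have W': "W (as @ [y] @ cs)" and c: "path_cost w xs = path_cost w (as @ [y] @ cs) + path_cost w (y # bs @ [y])"
      using W_append3[of as y bs cs] less.prems xs by auto
    have Wc: "W (y # bs @ [y])" using W_append3[of as y bs cs] less.prems xs by auto
    have "path_cost w (y # bs @ [y]) > 0" by (rule cost_pos[OF Wc]) simp
    moreover obtain p where "is_path E (hd (as @ [y] @ cs)) (last (as @ [y] @ cs)) p"
       "path_cost w p \<le> path_cost w (as @ [y] @ cs)"
      using less.hyps[OF _ W'] xs by auto
    moreover have "hd (as @ [y] @ cs) = hd xs" "last (as @ [y] @ cs) = last xs"
      unfolding xs by (cases as; simp; cases cs; simp)+
    ultimately show ?thesis using c by (intro exI[of _ p]) auto
  qed
qed

lemma W_alt: "W xs \<longleftrightarrow> xs \<noteq> [] \<and> successively (\<lambda>a b. (a, b) \<in> E) xs"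
  by (simp add: W_def successively_edges)

lemma W_appendD: "W (xs @ ys) \<Longrightarrow> xs \<noteq> [] \<Longrightarrow> W xs" "W (xs @ ys) \<Longrightarrow> ys \<noteq> [] \<Longrightarrow> W ys"
  by (auto simp: W_alt successively_append_iff)

lemma W_glue:
  assumes "xs \<noteq> []" "ys \<noteq> []" "last xs = hd ys"
  shows "W (xs @ tl ys) \<longleftrightarrow> W xs \<and> W ys"
    "path_cost w (xs @ tl ys) = path_cost w xs + path_cost w ys"
  using edges_glue[OF assms] assms unfolding W_def path_cost_edges by auto

lemma is_path_W: "is_path E a b p \<Longrightarrow> W p"
  by (simp add: is_path_def W_alt)

lemma finite_paths: "finite {p. is_path E a b p}"
proof (rule finite_subset)
  show "{p. is_path E a b p} \<subseteq> {xs. set xs \<subseteq> UNIV \<and> length xs \<le> CARD('v)}"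
    by (auto simp: is_path_def dest!: distinct_card intro: card_mono[of UNIV, simplified])
      (metis card_mono finite subset_UNIV)
  show "finite {xs. set xs \<subseteq> (UNIV::'v set) \<and> length xs \<le> CARD('v)}"
    by (rule finite_lists_length_le) simp
qed

definition D :: real where
  "D = Min (path_cost w ` {p. is_path E s t p})"

lemma D_le: "is_path E s t p \<Longrightarrow> D \<le> path_cost w p"
  unfolding D_def by (rule Min_le) (auto intro: finite_paths)

lemma D_ex: "\<exists>p. is_path E s t p \<and> path_cost w p = D"
proof -
  have "D \<in> path_cost w ` {p. is_path E s t p}"
    unfolding D_def by (rule Min_in) (use finite_paths reach in auto)
  thus ?thesis by auto
qed

lemma sp_iff: "shortest_path E w s t p \<longleftrightarrow> is_path E s t p \<and> path_cost w p = D"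
proof
  assume a: "shortest_path E w s t p"
  obtain q where q: "is_path E s t q" "path_cost w q = D" using D_ex by blast
  show "is_path E s t p \<and> path_cost w p = D"
    using a q D_le[of p] unfolding shortest_path_def by force
next
  assume "is_path E s t p \<and> path_cost w p = D"
  thus "shortest_path E w s t p" unfolding shortest_path_def using D_le by auto
qed

lemma walk_ge: "W xs \<Longrightarrow> hd xs = s \<Longrightarrow> last xs = t \<Longrightarrow>
   D \<le> path_cost w xs \<and> (\<not> distinct xs \<longrightarrow> D < path_cost w xs)"
  using walk_to_path[of xs] D_le by fastforce

lemma D_pos: "D > 0"
proof -
  obtain p where p: "is_path E s t p" "path_cost w p = D" using D_ex by blast
  have "length p \<ge> 2"
  proof (rule ccontr)
    assume "\<not> length p \<ge> 2"
    then obtain x where "p = [x]" using p(1) unfolding is_path_def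
      by (cases p; cases "tl p") auto
    thus False using p(1) st by (auto simp: is_path_def)
  qed
  thus ?thesis using cost_pos[OF is_path_W[OF p(1)]] p(2) by simp
qed

lemma swap_prefix:
  assumes p1: "shortest_path E w s t (as1 @ v # bs1)" and p2: "shortest_path E w s t (as2 @ v # bs2)"
  shows "path_cost w (as1 @ [v]) = path_cost w (as2 @ [v])"
proof -
  have g: "as @ v # bs = (as @ [v]) @ tl (v # bs)" for as bs :: "'v list" by simp
  have hd1: "hd (as @ [v]) = hd (as @ v # bs)" for as bs :: "'v list" by (cases as) auto
  have last1: "last (v # bs) = last (as @ v # bs)" for as bs :: "'v list" by (cases bs) auto
  have gl: "W (as @ v # bs) \<longleftrightarrow> W (as @ [v]) \<and> W (v # bs)"
    "path_cost w (as @ v # bs) = path_cost w (as @ [v]) + path_cost w (v # bs)" for as bs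
    using W_glue[of "as @ [v]" "v # bs"] by simp_all
  have ip1: "is_path E s t (as1 @ v # bs1)" "path_cost w (as1 @ v # bs1) = D" using p1 sp_iff by auto
  have ip2: "is_path E s t (as2 @ v # bs2)" "path_cost w (as2 @ v # bs2) = D" using p2 sp_iff by auto
  have W1: "W (as1 @ [v])" "W (v # bs1)" using is_path_W[OF ip1(1)] gl(1)[of as1 bs1] by auto
  have W2: "W (as2 @ [v])" "W (v # bs2)" using is_path_W[OF ip2(1)] gl(1)[of as2 bs2] by auto
  have h1: "hd (as1 @ [v]) = s" "last (v # bs1) = t" "hd (as2 @ [v]) = s" "last (v # bs2) = t"
    using ip1(1) ip2(1) hd1[of as1 bs1] last1[of bs1 as1] hd1[of as2 bs2] last1[of bs2 as2]
    unfolding is_path_def by auto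
  have "W (as1 @ v # bs2)" "hd (as1 @ v # bs2) = s" "last (as1 @ v # bs2) = t"
    using gl(1)[of as1 bs2] W1 W2 h1 hd1[of as1 bs2] last1[of bs2 as1] by auto
  hence "D \<le> path_cost w (as1 @ v # bs2)"
    using walk_ge[of "as1 @ v # bs2"] by blast
  moreover have "W (as2 @ v # bs1)" "hd (as2 @ v # bs1) = s" "last (as2 @ v # bs1) = t"
    using gl(1)[of as2 bs1] W1 W2 h1 hd1[of as2 bs1] last1[of bs1 as2] by auto
  hence "D \<le> path_cost w (as2 @ v # bs1)"
    using walk_ge[of "as2 @ v # bs1"] by blast
  ultimately show ?thesis using ip1(2) ip2(2) gl(2)[of as1 bs1] gl(2)[of as2 bs2] gl(2)[of as1 bs2] gl(2)[of as2 bs1]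
    by linarith
qed

lemma cost_cons2: "path_cost w (x # y # r) = w x y + path_cost w (y # r)"
  by (simp add: path_cost_def)

lemma same_set_eq:
  "xs \<noteq> [] \<Longrightarrow> W xs \<Longrightarrow> W ys \<Longrightarrow> distinct xs \<Longrightarrow> distinct ys \<Longrightarrow> hd xs = hd ys \<Longrightarrow>
   set xs = set ys \<Longrightarrow>
   (\<forall>v as1 bs1 as2 bs2. xs = as1 @ v # bs1 \<longrightarrow> ys = as2 @ v # bs2 \<longrightarrow>
       path_cost w (as1 @ [v]) = path_cost w (as2 @ [v])) \<Longrightarrow> xs = ys"
proof (induction xs arbitrary: ys)
  case Nil
  then show ?case by simp
next
  case (Cons x xs')
  note pr = Cons.prems
  obtain ys' where ys: "ys = x # ys'" using pr by (cases ys) auto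
  show ?case
  proof (cases xs')
    case Nil
    then show ?thesis using pr ys by (cases ys') auto
  next
    case xr: (Cons a r)
    have "a \<in> set ys" using pr xr by auto
    moreover have "a \<noteq> x" using pr xr by auto
    ultimately obtain b r' where ys': "ys' = b # r'" using ys by (cases ys') auto
    show ?thesis
    proof (cases "a = b")
      case True
      have "xs' = ys'"
      proof (rule Cons.IH)
        show "xs' \<noteq> []" "distinct xs'" "distinct ys'" "hd xs' = hd ys'"
          using pr xr ys ys' True by auto
        show "W xs'" using pr(2) W_appendD(2)[of "[x]" xs'] xr by simp
        show "W ys'" using pr(3) W_appendD(2)[of "[x]" ys'] ys ys' by simp
        show "set xs' = set ys'" using pr ys by auto
        show "\<forall>v as1 bs1 as2 bs2. xs' = as1 @ v # bs1 \<longrightarrow> ys' = as2 @ v # bs2 \<longrightarrow>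
          path_cost w (as1 @ [v]) = path_cost w (as2 @ [v])"
        proof (intro allI impI)
          fix v as1 bs1 as2 bs2 assume h: "xs' = as1 @ v # bs1" "ys' = as2 @ v # bs2"
          have "path_cost w ((x # as1) @ [v]) = path_cost w ((x # as2) @ [v])"
            using pr(8)[rule_format, of "x # as1" v bs1 "x # as2" bs2] h ys by simp
          moreover obtain u1 where u1: "as1 @ [v] = a # u1"
            using h xr by (cases as1) auto
          moreover obtain u2 where u2: "as2 @ [v] = a # u2"
            using h ys' True by (cases as2) auto
          ultimately show "path_cost w (as1 @ [v]) = path_cost w (as2 @ [v])"
            by (simp add: cost_cons2)
        qed
      qed
      thus ?thesis using ys by simp
    next
      case False
      have "a \<in> set r'" using \<open>a \<in> set ys\<close> \<open>a \<noteq> x\<close> False ys ys' by auto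
      then obtain c1 c2 where r': "r' = c1 @ a # c2" by (meson split_list)
      have "b \<in> set (x # xs')" using pr ys ys' by auto
      moreover have "b \<noteq> x" using pr ys ys' by auto
      ultimately have "b \<in> set r" using False xr by auto
      then obtain d1 d2 where r: "r = d1 @ b # d2" by (meson split_list)
      have e1: "path_cost w ([x] @ [a]) = path_cost w ((x # b # c1) @ [a])"
        using pr(8)[rule_format, of "[x]" a r "x # b # c1" c2] xr ys ys' r' by simp
      have e2: "path_cost w ((x # a # d1) @ [b]) = path_cost w ([x] @ [b])"
        using pr(8)[rule_format, of "x # a # d1" b d2 "[x]" r'] xr ys ys' r by simp
      have "W ((x # b # c1 @ [a]) @ c2)" using pr(3) ys ys' r' by simp
      hence "W (x # b # c1 @ [a])" using W_appendD(1) by blast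
      hence "W ([x] @ (b # c1 @ [a]))" by simp
      hence "W (b # c1 @ [a])" using W_appendD(2) by blast
      hence p1: "path_cost w (b # c1 @ [a]) > 0" by (rule cost_pos) simp
      have "W ((x # a # d1 @ [b]) @ d2)" using pr(2) xr r by simp
      hence "W (x # a # d1 @ [b])" using W_appendD(1) by blast
      hence "W ([x] @ (a # d1 @ [b]))" by simp
      hence "W (a # d1 @ [b])" using W_appendD(2) by blast
      hence p2: "path_cost w (a # d1 @ [b]) > 0" by (rule cost_pos) simp
      have "path_cost w ((x # b # c1) @ [a]) = w x b + path_cost w (b # c1 @ [a])"
        by (simp add: cost_cons2)
      moreover have "path_cost w ((x # a # d1) @ [b]) = w x a + path_cost w (a # d1 @ [b])"
        by (simp add: cost_cons2)
      moreover have "path_cost w ([x] @ [a]) = w x a" "path_cost w ([x] @ [b]) = w x b"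
        by (simp_all add: path_cost_def)
      ultimately show ?thesis using e1 e2 p1 p2 by linarith
    qed
  qed
qed

lemma sp_same_set:
  assumes "shortest_path E w s t xs" "shortest_path E w s t ys" "set xs = set ys"
  shows "xs = ys"
proof (rule same_set_eq)
  have "is_path E s t xs" "is_path E s t ys" using assms sp_iff by auto
  thus "xs \<noteq> []" "W xs" "W ys" "distinct xs" "distinct ys" "hd xs = hd ys" "set xs = set ys"
    using assms(3) by (auto simp: is_path_def intro: is_path_W)
  show "\<forall>v as1 bs1 as2 bs2. xs = as1 @ v # bs1 \<longrightarrow> ys = as2 @ v # bs2 \<longrightarrow>
       path_cost w (as1 @ [v]) = path_cost w (as2 @ [v])"
    using swap_prefix assms by blast
qed

end


lemma edges_setD: "(a, b) \<in> set (edges xs) \<Longrightarrow> a \<in> set xs \<and> b \<in> set xs"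
  unfolding edges_def using set_zip_leftD[of a b xs "tl xs"] set_zip_rightD[of a b xs "tl xs"]
  by (cases xs) auto

lemma prod_list_pos': "\<forall>x\<in>set xs. x > 0 \<Longrightarrow> prod_list xs > (0::real)"
  by (induction xs) auto

lemma tw_dw: "m \<notin> set as \<Longrightarrow> takeWhile (\<lambda>x. x \<noteq> m) (as @ m # r) = as \<and>
   dropWhile (\<lambda>x. x \<noteq> m) (as @ m # r) = m # r"
  by (induction as) auto

lemma glue_hd_last: "xs \<noteq> [] \<Longrightarrow> ys \<noteq> [] \<Longrightarrow> last xs = hd ys \<Longrightarrow>
   hd (xs @ tl ys) = hd xs \<and> last (xs @ tl ys) = last ys"
  by (cases ys) auto

lemma edges_gg:
  assumes "xs1 \<noteq> []" "xs2 \<noteq> []" "last xs1 = hd xs2" "last xs2 = z"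
  shows "edges (xs1 @ tl xs2 @ [t]) = edges xs1 @ edges xs2 @ [(z, t)]"
proof -
  have "xs1 @ tl xs2 @ [t] = (xs1 @ tl xs2) @ tl [z, t]" by simp
  also have "edges \<dots> = edges (xs1 @ tl xs2) @ edges [z, t]"
    by (rule edges_glue) (use assms glue_hd_last[of xs1 xs2] in auto)
  also have "edges (xs1 @ tl xs2) = edges xs1 @ edges xs2"
    by (rule edges_glue) (use assms in auto)
  finally show ?thesis by simp
qed

context ctx
begin

definition Pt :: "'v \<Rightarrow> 'v \<Rightarrow> real" where
  "Pt a b = (if a \<noteq> t \<and> b \<noteq> t then P a b else 0)"

definition mwP :: "'v list \<Rightarrow> real" where
  "mwP xs = prod_list (map (\<lambda>(a, b). Pt a b) (edges xs))"

definition pwt :: "'v list \<Rightarrow> real" where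
  "pwt xs = prod_list (map (\<lambda>(a, b). P a b) (edges xs))"

definition good :: "'v list \<Rightarrow> bool" where
  "good xs \<longleftrightarrow> (\<forall>(a, b)\<in>set (edges xs). a \<noteq> t \<and> b \<noteq> t \<and> (a, b) \<in> E)"

lemma P_zero: "(a, b) \<notin> E \<Longrightarrow> P a b = 0"
  using P_edge[of a b] P_nonneg[of a b] by auto

lemma pwt_pos: "\<forall>(a, b)\<in>set (edges xs). (a, b) \<in> E \<Longrightarrow> pwt xs > 0"
  unfolding pwt_def by (rule prod_list_pos') (auto simp: P_edge)

lemma mwP_eq: "mwP xs = (if good xs then pwt xs else 0)"
proof (cases "good xs")
  case True
  hence eq: "map (\<lambda>(a, b). Pt a b) (edges xs) = map (\<lambda>(a, b). P a b) (edges xs)"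
    unfolding good_def Pt_def by (intro map_cong) auto
  have "mwP xs = pwt xs" unfolding mwP_def pwt_def by (simp only: eq)
  thus ?thesis using True by simp
next
  case False
  then obtain a b where ab: "(a, b) \<in> set (edges xs)" "\<not> (a \<noteq> t \<and> b \<noteq> t \<and> (a, b) \<in> E)"
    unfolding good_def by auto
  hence "Pt a b = 0" unfolding Pt_def using P_zero by auto
  hence "0 \<in> set (map (\<lambda>(a, b). Pt a b) (edges xs))" using ab(1) by force
  thus ?thesis using False by (simp add: mwP_def prod_list_zero_iff)
qed

definition L :: "nat \<Rightarrow> 'v \<Rightarrow> 'v \<Rightarrow> 'v list set" where
  "L k x y = {xs. length xs = Suc k \<and> hd xs = x \<and> last xs = y}"

definition LL :: "nat \<Rightarrow> 'v \<Rightarrow> 'v \<Rightarrow> 'v list set" where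
  "LL K x y = (\<Union>k<K. L k x y)"

lemma finite_L: "finite (L k x y)"
proof (rule finite_subset)
  show "L k x y \<subseteq> {xs. set xs \<subseteq> UNIV \<and> length xs = Suc k}" by (auto simp: L_def)
qed (rule finite_lists_length_eq, simp)

lemma finite_LL: "finite (LL K x y)"
  unfolding LL_def using finite_L by auto

lemma LL_iff: "xs \<in> LL K x y \<longleftrightarrow> xs \<noteq> [] \<and> length xs \<le> K \<and> hd xs = x \<and> last xs = y"
  unfolding LL_def L_def by (cases xs) auto

definition II :: "nat \<Rightarrow> 'v \<Rightarrow> ('v \<times> 'v list \<times> 'v list) set" where
  "II K m = Sigma (UNIV - {t}) (\<lambda>z. LL K s m \<times> LL K m z)"

lemma finite_II: "finite (II K m)"
  unfolding II_def by (intro finite_SigmaI finite_cartesian_product finite_LL) auto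

fun cc :: "'v \<times> 'v list \<times> 'v list \<Rightarrow> real" where
  "cc (z, xs1, xs2) = mwP xs1 * mwP xs2 * P z t"

fun ee :: "'v \<times> 'v list \<times> 'v list \<Rightarrow> real" where
  "ee (z, xs1, xs2) = path_cost w xs1 + path_cost w xs2 + w z t"

fun gg :: "'v \<times> 'v list \<times> 'v list \<Rightarrow> 'v list" where
  "gg (z, xs1, xs2) = xs1 @ tl xs2 @ [t]"

lemma gg_props:
  assumes i: "(z, xs1, xs2) \<in> II K m" and c: "cc (z, xs1, xs2) \<noteq> 0"
  shows "W (gg (z, xs1, xs2))" "hd (gg (z, xs1, xs2)) = s" "last (gg (z, xs1, xs2)) = t"
    "path_cost w (gg (z, xs1, xs2)) = ee (z, xs1, xs2)"
    "pwt (gg (z, xs1, xs2)) = cc (z, xs1, xs2)"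
proof -
  have l: "xs1 \<noteq> []" "xs2 \<noteq> []" "last xs1 = hd xs2" "last xs2 = z" "hd xs1 = s" "z \<noteq> t"
    using i by (auto simp: II_def LL_iff)
  have g: "good xs1" "good xs2" "P z t \<noteq> 0" using c by (auto simp: mwP_eq split: if_splits)
  have e: "edges (gg (z, xs1, xs2)) = edges xs1 @ edges xs2 @ [(z, t)]"
    using edges_gg[OF l(1-4)] by simp
  have zt: "(z, t) \<in> E" using g(3) P_zero by blast
  show "W (gg (z, xs1, xs2))" unfolding W_def e using g zt by (auto simp: good_def)
  show "hd (gg (z, xs1, xs2)) = s" using l by (cases xs1) auto
  show "last (gg (z, xs1, xs2)) = t" by simp
  show "path_cost w (gg (z, xs1, xs2)) = ee (z, xs1, xs2)"
    using edges_gg[OF l(1-4)] by (simp add: path_cost_edges)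
  show "pwt (gg (z, xs1, xs2)) = cc (z, xs1, xs2)"
    unfolding pwt_def e using g by (simp add: mwP_eq pwt_def)
qed

lemma ee_ge: "i \<in> II K m \<Longrightarrow> cc i \<noteq> 0 \<Longrightarrow> D \<le> ee i"
  using gg_props walk_ge by (cases i) fastforce

definition hh :: "'v \<Rightarrow> 'v list \<Rightarrow> 'v \<times> 'v list \<times> 'v list" where
  "hh m p = (last (butlast p), takeWhile (\<lambda>x. x \<noteq> m) p @ [m], butlast (dropWhile (\<lambda>x. x \<noteq> m) p))"

lemma hh_eq: "m \<notin> set as \<Longrightarrow> hh m (as @ m # cs @ [t]) = (last (m # cs), as @ [m], m # cs)"
proof -
  assume "m \<notin> set as"
  hence "takeWhile (\<lambda>x. x \<noteq> m) (as @ m # cs @ [t]) = as \<and>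
    dropWhile (\<lambda>x. x \<noteq> m) (as @ m # cs @ [t]) = m # cs @ [t]"
    by (rule tw_dw)
  moreover have "butlast (as @ m # cs @ [t]) = as @ m # cs"
    by (simp add: butlast_append)
  moreover have "last (as @ m # cs) = last (m # cs)" by simp
  ultimately show ?thesis unfolding hh_def by (simp add: butlast_append)
qed

lemma comb:
  assumes m: "m \<noteq> t" and K: "CARD('v) \<le> K"
  shows "(\<Sum>i\<in>{i\<in>II K m. ee i = D}. cc i) = (\<Sum>p\<in>{p. shortest_path E w s t p \<and> m \<in> set p}. pwt p)"
proof -
  have "(\<Sum>i\<in>{i\<in>II K m. ee i = D}. cc i) = (\<Sum>i\<in>{i\<in>II K m. ee i = D \<and> cc i \<noteq> 0}. cc i)"
    by (rule sum.mono_neutral_right) (use finite_II in auto)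
  also have "\<dots> = (\<Sum>p\<in>{p. shortest_path E w s t p \<and> m \<in> set p}. pwt p)"
  proof (rule sum.reindex_bij_witness[where j = gg and i = "hh m"])
    fix i assume "i \<in> {i \<in> II K m. ee i = D \<and> cc i \<noteq> 0}"
    then obtain z xs1 xs2 where i: "i = (z, xs1, xs2)" "(z, xs1, xs2) \<in> II K m"
      "ee (z, xs1, xs2) = D" "cc (z, xs1, xs2) \<noteq> 0" by (cases i) auto
    note gp = gg_props[OF i(2,4)]
    define p where "p = gg (z, xs1, xs2)"
    have dist: "distinct p" using walk_ge[OF gp(1-3)] gp(4) i unfolding p_def by auto
    have l: "xs1 \<noteq> []" "xs2 \<noteq> []" "last xs1 = hd xs2" "last xs2 = z" "hd xs1 = s" "z \<noteq> t"
      "last xs1 = m" using i by (auto simp: II_def LL_iff)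
    obtain as where as: "xs1 = as @ [m]" using l by (metis append_butlast_last_id)
    obtain cs where cs: "xs2 = m # cs" using l by (cases xs2) auto
    have gi: "p = as @ m # cs @ [t]" using as cs unfolding p_def by simp
    have "m \<notin> set as" using dist gi by auto
    hence "hh m p = (last (m # cs), as @ [m], m # cs)" using gi hh_eq by simp
    thus "hh m (gg i) = i" using i as cs l unfolding p_def by simp
    have "m \<in> set p" using gi by simp
    moreover have "is_path E s t p" using gp dist unfolding is_path_def p_def by (auto simp: W_alt)
    ultimately show "gg i \<in> {p. shortest_path E w s t p \<and> m \<in> set p}"
      using gp i unfolding sp_iff p_def by auto
    show "pwt (gg i) = cc i" using gp i by simp
  next
    fix p assume "p \<in> {p. shortest_path E w s t p \<and> m \<in> set p}"
    hence p: "is_path E s t p" "path_cost w p = D" "m \<in> set p" using sp_iff by auto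
    obtain as bs where asbs: "p = as @ m # bs" using p(3) by (meson split_list)
    have "bs \<noteq> []" using p(1) m asbs by (auto simp: is_path_def)
    then obtain cs where "bs = cs @ [last bs]" by (metis append_butlast_last_id)
    moreover have "last bs = t" using p(1) asbs \<open>bs \<noteq> []\<close> by (auto simp: is_path_def)
    ultimately have pe: "p = as @ m # cs @ [t]" using asbs by simp
    have dp: "distinct p" using p(1) by (simp add: is_path_def)
    have mas: "m \<notin> set as" using dp pe by auto
    have hp: "hh m p = (last (m # cs), as @ [m], m # cs)" using hh_eq[OF mas] pe by simp
    show "gg (hh m p) = p" using hp pe by simp
    have tn: "t \<notin> set (m # cs)" "t \<notin> set as" using dp pe by auto
    have len: "length p \<le> CARD('v)" using dp by (metis card_mono distinct_card finite subset_UNIV)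
    have hs: "hd (as @ [m]) = s" using p(1) pe by (cases as) (auto simp: is_path_def)
    have "as @ [m] \<in> LL K s m" unfolding LL_iff using hs len K pe by auto
    moreover have "m # cs \<in> LL K m (last (m # cs))" unfolding LL_iff using len K pe by auto
    moreover have "last (m # cs) \<noteq> t" using tn by (metis last_in_set list.distinct(1))
    ultimately have mem: "(last (m # cs), as @ [m], m # cs) \<in> II K m"
      unfolding II_def by auto
    have Wp: "W p" using p(1) by (rule is_path_W)
    have e: "edges p = edges (as @ [m]) @ edges (m # cs) @ [(last (m # cs), t)]"
      using edges_gg[of "as @ [m]" "m # cs" "last (m # cs)"] pe by simp
    have "good (as @ [m])" "good (m # cs)"
      using Wp tn unfolding good_def W_def e by (auto dest: edges_setD)
    hence "cc (last (m # cs), as @ [m], m # cs) = pwt p"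
      unfolding e pwt_def by (simp add: mwP_eq pwt_def)
    moreover have "pwt p > 0" using Wp by (intro pwt_pos) (simp add: W_def)
    moreover have "ee (last (m # cs), as @ [m], m # cs) = path_cost w p"
      using e by (simp add: path_cost_edges)
    ultimately show "hh m p \<in> {i \<in> II K m. ee i = D \<and> cc i \<noteq> 0}"
      using hp mem p(2) by auto
  qed
  finally show ?thesis .
qed

end


lemma sum_delta_l: fixes a b :: "'a::finite \<Rightarrow> real"
  shows "(\<Sum>j\<in>(UNIV::'a::finite set). ((if i = j then 1 else 0) - a j) * b j) = b i - (\<Sum>j\<in>UNIV. a j * b j)"
proof -
  have e: "((if i = j then 1 else 0) - a j) * b j = (if i = j then b j else 0) - a j * b j" for j
    by (simp add: algebra_simps)
  have "(\<Sum>j\<in>(UNIV::'a set). ((if i = j then 1 else 0) - a j) * b j) =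
     (\<Sum>j\<in>UNIV. (if i = j then b j else 0)) - (\<Sum>j\<in>UNIV. a j * b j)"
    unfolding e by (rule sum_subtractf)
  thus ?thesis by simp
qed

lemma sum_delta_r: "(\<Sum>j\<in>(UNIV::'a::finite set). b j * ((if j = i then 1 else 0) - a j)) = (b i::real) - (\<Sum>j\<in>UNIV. b j * a j)"
  using sum_delta_l[of i a b] by (simp add: mult.commute eq_commute)

context ctx
begin

definition Mt :: "real \<Rightarrow> real^'v^'v" where "Mt \<alpha> = Mtrans P w t \<alpha>"
definition Fm :: "real \<Rightarrow> real^'v^'v" where "Fm \<alpha> = matrix_inv (mat 1 - Mt \<alpha>)"

definition wmin :: real where "wmin = Min ((\<lambda>(a, b). w a b) ` E)"

lemma E_ne: "E \<noteq> {}"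
proof -
  obtain p where "is_path E s t p" using reach by blast
  hence "W p" "length p \<ge> 2"
    using st by (auto simp: is_path_def intro!: is_path_W) (cases p; cases "tl p"; auto)
  then obtain a b r where "p = a # b # r" by (cases p; cases "tl p") auto
  thus ?thesis using \<open>W p\<close> by (auto simp: W_def)
qed

lemma wmin_le: "(a, b) \<in> E \<Longrightarrow> wmin \<le> w a b"
  unfolding wmin_def by (rule Min_le) force+

lemma wmin_pos: "wmin > 0"
proof -
  have "wmin \<in> (\<lambda>(a, b). w a b) ` E" unfolding wmin_def using E_ne by (intro Min_in) auto
  thus ?thesis using w_pos by auto
qed

lemma Mt_entry: "Mt \<alpha> $ a $ b = Pt a b * \<alpha> powr w a b"
  by (simp add: Mt_def Mtrans_def Palpha_def Pt_def)

lemma Pt_le: "0 \<le> Pt a b" "Pt a b \<le> P a b"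
  using P_nonneg by (auto simp: Pt_def)

lemma Mt_nonneg: "0 \<le> Mt \<alpha> $ a $ b"
  using Pt_le by (simp add: Mt_entry)

lemma Mt_le: assumes "0 < \<alpha>" "\<alpha> \<le> 1" shows "Mt \<alpha> $ a $ b \<le> P a b * \<alpha> powr wmin"
proof (cases "(a, b) \<in> E")
  case True
  have "\<alpha> powr w a b \<le> \<alpha> powr wmin" using assms wmin_le[OF True] by (intro powr_mono') auto
  thus ?thesis unfolding Mt_entry using Pt_le[of a b] P_nonneg[of a b]
    by (meson mult_mono powr_ge_zero)
next
  case False
  thus ?thesis using P_zero[OF False] Pt_le[of a b] by (simp add: Mt_entry)
qed

lemma rowsum: assumes "0 < \<alpha>" "\<alpha> \<le> 1" shows "(\<Sum>b\<in>UNIV. Mt \<alpha> $ a $ b) \<le> \<alpha> powr wmin"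
proof -
  have "(\<Sum>b\<in>UNIV. Mt \<alpha> $ a $ b) \<le> (\<Sum>b\<in>UNIV. P a b * \<alpha> powr wmin)"
    by (rule sum_mono) (rule Mt_le[OF assms])
  also have "\<dots> = \<alpha> powr wmin" using P_stoch[of a] by (simp add: sum_distrib_right[symmetric])
  finally show ?thesis .
qed

lemma rho_lt: "0 < \<alpha> \<Longrightarrow> \<alpha> < 1 \<Longrightarrow> \<alpha> powr wmin < 1"
  using powr_less_mono2[OF wmin_pos, of \<alpha> 1] by simp

lemma mvec: "((mat 1 - Mt \<alpha>) *v x) $ i = x $ i - (\<Sum>j\<in>UNIV. Mt \<alpha> $ i $ j * x $ j)"
  by (simp add: matrix_vector_mult_def mat_def sum_delta_l)

lemma inv: assumes "0 < \<alpha>" "\<alpha> < 1" shows "invertible (mat 1 - Mt \<alpha>)"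
proof -
  have "\<forall>x. (mat 1 - Mt \<alpha>) *v x = 0 \<longrightarrow> x = 0"
  proof (intro allI impI)
    fix x :: "real^'v" assume x0: "(mat 1 - Mt \<alpha>) *v x = 0"
    define \<mu> where "\<mu> = Max (range (\<lambda>i. \<bar>x $ i\<bar>))"
    have le: "\<bar>x $ i\<bar> \<le> \<mu>" for i unfolding \<mu>_def by (rule Max_ge) auto
    have "\<mu> \<in> range (\<lambda>i. \<bar>x $ i\<bar>)" unfolding \<mu>_def by (rule Max_in) auto
    then obtain i0 where i0: "\<mu> = \<bar>x $ i0\<bar>" by auto
    have "x $ i0 = (\<Sum>j\<in>UNIV. Mt \<alpha> $ i0 $ j * x $ j)"
      using arg_cong[OF x0, of "\<lambda>v. v $ i0"] by (simp add: mvec)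
    hence "\<bar>x $ i0\<bar> = \<bar>\<Sum>j\<in>UNIV. Mt \<alpha> $ i0 $ j * x $ j\<bar>" by simp
    also have "\<dots> \<le> (\<Sum>j\<in>UNIV. \<bar>Mt \<alpha> $ i0 $ j * x $ j\<bar>)" by (rule sum_abs)
    also have "\<dots> = (\<Sum>j\<in>UNIV. Mt \<alpha> $ i0 $ j * \<bar>x $ j\<bar>)"
      by (simp add: abs_mult abs_of_nonneg[OF Mt_nonneg])
    also have "\<dots> \<le> (\<Sum>j\<in>UNIV. Mt \<alpha> $ i0 $ j * \<mu>)"
      by (intro sum_mono mult_left_mono le Mt_nonneg)
    also have "\<dots> \<le> \<alpha> powr wmin * \<mu>"
      using rowsum[of \<alpha> i0] assms le[of i0] by (simp add: sum_distrib_right[symmetric] mult_right_mono)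
    finally have "\<mu> \<le> \<alpha> powr wmin * \<mu>" using i0 by simp
    hence "(1 - \<alpha> powr wmin) * \<mu> \<le> 0" by (simp add: algebra_simps)
    moreover have "1 - \<alpha> powr wmin > 0" using rho_lt[OF assms] by simp
    ultimately have "\<mu> \<le> 0" by (simp add: mult_le_0_iff)
    hence "x $ i = 0" for i using le[of i] by simp
    thus "x = 0" by (simp add: vec_eq_iff)
  qed
  thus ?thesis using matrix_left_invertible_ker invertible_left_inverse by blast
qed

lemma Fm_both: assumes "0 < \<alpha>" "\<alpha> < 1"
  shows "Fm \<alpha> ** (mat 1 - Mt \<alpha>) = mat 1" "(mat 1 - Mt \<alpha>) ** Fm \<alpha> = mat 1"
proof -
  have "\<exists>A'. (mat 1 - Mt \<alpha>) ** A' = mat 1 \<and> A' ** (mat 1 - Mt \<alpha>) = mat 1"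
    using inv[OF assms] unfolding invertible_def by blast
  hence "(mat 1 - Mt \<alpha>) ** Fm \<alpha> = mat 1 \<and> Fm \<alpha> ** (mat 1 - Mt \<alpha>) = mat 1"
    unfolding Fm_def matrix_inv_def by (rule someI_ex)
  thus "Fm \<alpha> ** (mat 1 - Mt \<alpha>) = mat 1" "(mat 1 - Mt \<alpha>) ** Fm \<alpha> = mat 1" by auto
qed

lemma F_right: assumes "0 < \<alpha>" "\<alpha> < 1"
  shows "Fm \<alpha> $ x $ y = (if x = y then 1 else 0) + (\<Sum>z\<in>UNIV. Fm \<alpha> $ x $ z * Mt \<alpha> $ z $ y)"
proof -
  have "(Fm \<alpha> ** (mat 1 - Mt \<alpha>)) $ x $ y = (mat 1 :: real^'v^'v) $ x $ y" using Fm_both[OF assms] by simp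
  thus ?thesis
    by (simp add: matrix_matrix_mult_def mat_def sum_delta_r split: if_splits)
qed

lemma F_left: assumes "0 < \<alpha>" "\<alpha> < 1"
  shows "Fm \<alpha> $ x $ y = (if x = y then 1 else 0) + (\<Sum>z\<in>UNIV. Mt \<alpha> $ x $ z * Fm \<alpha> $ z $ y)"
proof -
  have "((mat 1 - Mt \<alpha>) ** Fm \<alpha>) $ x $ y = (mat 1 :: real^'v^'v) $ x $ y" using Fm_both[OF assms] by simp
  thus ?thesis
    by (simp add: matrix_matrix_mult_def mat_def sum_delta_l split: if_splits)
qed

definition CF :: real where "CF = 1 / (1 - (1/2) powr wmin)"

lemma F_bound: assumes "0 < \<alpha>" "\<alpha> \<le> 1/2" shows "\<bar>Fm \<alpha> $ x $ y\<bar> \<le> CF"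
proof -
  have a1: "\<alpha> < 1" using assms by simp
  define r where "r = (1/2::real) powr wmin"
  have r1: "r < 1" unfolding r_def by (rule rho_lt) auto
  have ar: "\<alpha> powr wmin \<le> r" unfolding r_def using assms wmin_pos by (intro powr_mono2) auto
  define \<mu> where "\<mu> = Max (range (\<lambda>i. \<bar>Fm \<alpha> $ i $ y\<bar>))"
  have le: "\<bar>Fm \<alpha> $ i $ y\<bar> \<le> \<mu>" for i unfolding \<mu>_def by (rule Max_ge) auto
  have "\<mu> \<in> range (\<lambda>i. \<bar>Fm \<alpha> $ i $ y\<bar>)" unfolding \<mu>_def by (rule Max_in) auto
  then obtain i0 where i0: "\<mu> = \<bar>Fm \<alpha> $ i0 $ y\<bar>" by auto
  have "\<bar>Fm \<alpha> $ i0 $ y\<bar> = \<bar>(if i0 = y then 1 else 0) + (\<Sum>z\<in>UNIV. Mt \<alpha> $ i0 $ z * Fm \<alpha> $ z $ y)\<bar>"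
    using F_left[OF assms(1) a1, of i0 y] by simp
  also have "\<dots> \<le> \<bar>(if i0 = y then 1 else 0::real)\<bar> + \<bar>\<Sum>z\<in>UNIV. Mt \<alpha> $ i0 $ z * Fm \<alpha> $ z $ y\<bar>"
    by (rule abs_triangle_ineq)
  also have "\<dots> \<le> 1 + \<bar>\<Sum>z\<in>UNIV. Mt \<alpha> $ i0 $ z * Fm \<alpha> $ z $ y\<bar>" by simp
  also have "\<bar>\<Sum>z\<in>UNIV. Mt \<alpha> $ i0 $ z * Fm \<alpha> $ z $ y\<bar> \<le> (\<Sum>z\<in>UNIV. Mt \<alpha> $ i0 $ z * \<mu>)"
  proof -
    have "\<bar>\<Sum>z\<in>UNIV. Mt \<alpha> $ i0 $ z * Fm \<alpha> $ z $ y\<bar> \<le> (\<Sum>z\<in>UNIV. \<bar>Mt \<alpha> $ i0 $ z * Fm \<alpha> $ z $ y\<bar>)"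
      by (rule sum_abs)
    also have "\<dots> \<le> (\<Sum>z\<in>UNIV. Mt \<alpha> $ i0 $ z * \<mu>)"
      by (intro sum_mono) (simp add: abs_mult Mt_nonneg le mult_left_mono)
    finally show ?thesis .
  qed
  also have "(\<Sum>z\<in>UNIV. Mt \<alpha> $ i0 $ z * \<mu>) \<le> r * \<mu>"
  proof -
    have "\<mu> \<ge> 0" using le[of i0] by simp
    hence "(\<Sum>z\<in>UNIV. Mt \<alpha> $ i0 $ z * \<mu>) \<le> \<alpha> powr wmin * \<mu>"
      using rowsum[of \<alpha> i0] assms by (simp add: sum_distrib_right[symmetric] mult_right_mono)
    also have "\<dots> \<le> r * \<mu>" using ar \<open>\<mu> \<ge> 0\<close> by (rule mult_right_mono)
    finally show ?thesis .
  qed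
  finally have "\<mu> \<le> 1 + r * \<mu>" using i0 by simp
  hence "\<mu> * (1 - r) \<le> 1" by (simp add: algebra_simps)
  hence "\<mu> \<le> 1 / (1 - r)" using r1 by (simp add: field_simps)
  thus ?thesis using le[of x] unfolding CF_def r_def by simp
qed

end


context ctx
begin

primrec ws :: "real \<Rightarrow> nat \<Rightarrow> 'v \<Rightarrow> 'v \<Rightarrow> real" where
  "ws \<alpha> 0 x y = (if x = y then 1 else 0)"
| "ws \<alpha> (Suc k) x y = (\<Sum>z\<in>UNIV. Mt \<alpha> $ x $ z * ws \<alpha> k z y)"

lemma ws_nonneg: "0 \<le> ws \<alpha> k x y"
  by (induction k arbitrary: x) (auto intro!: sum_nonneg mult_nonneg_nonneg Mt_nonneg)

lemma ws_le: assumes "0 < \<alpha>" "\<alpha> \<le> 1" shows "ws \<alpha> k x y \<le> \<alpha> powr (real k * wmin)"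
proof (induction k arbitrary: x)
  case 0
  then show ?case using assms by simp
next
  case (Suc k)
  have "ws \<alpha> (Suc k) x y \<le> (\<Sum>z\<in>UNIV. Mt \<alpha> $ x $ z * \<alpha> powr (real k * wmin))"
    unfolding ws.simps by (intro sum_mono mult_left_mono Suc.IH Mt_nonneg)
  also have "\<dots> = (\<Sum>z\<in>UNIV. Mt \<alpha> $ x $ z) * \<alpha> powr (real k * wmin)"
    by (simp add: sum_distrib_right)
  also have "\<dots> \<le> \<alpha> powr wmin * \<alpha> powr (real k * wmin)"
    by (intro mult_right_mono rowsum assms) simp
  also have "\<dots> = \<alpha> powr (real (Suc k) * wmin)"
    using assms by (simp add: powr_add[symmetric] algebra_simps)
  finally show ?case .
qed

lemma trunc: assumes "0 < \<alpha>" "\<alpha> < 1"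
  shows "Fm \<alpha> $ x $ y = (\<Sum>k<K. ws \<alpha> k x y) + (\<Sum>z\<in>UNIV. Fm \<alpha> $ x $ z * ws \<alpha> K z y)"
proof (induction K)
  case 0
  then show ?case by (simp add: if_distrib cong: if_cong)
next
  case (Suc K)
  have "(\<Sum>z\<in>UNIV. Fm \<alpha> $ x $ z * ws \<alpha> K z y) =
    (\<Sum>z\<in>UNIV. ((if x = z then 1 else 0) + (\<Sum>u\<in>UNIV. Fm \<alpha> $ x $ u * Mt \<alpha> $ u $ z)) * ws \<alpha> K z y)"
    by (subst F_right[OF assms]) simp
  also have "\<dots> = (\<Sum>z\<in>UNIV. (if x = z then ws \<alpha> K z y else 0)) +
     (\<Sum>z\<in>UNIV. \<Sum>u\<in>UNIV. Fm \<alpha> $ x $ u * Mt \<alpha> $ u $ z * ws \<alpha> K z y)"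
  proof -
    have "(\<lambda>z. ((if x = z then 1 else 0) + (\<Sum>u\<in>UNIV. Fm \<alpha> $ x $ u * Mt \<alpha> $ u $ z)) * ws \<alpha> K z y) =
      (\<lambda>z. (if x = z then ws \<alpha> K z y else 0) + (\<Sum>u\<in>UNIV. Fm \<alpha> $ x $ u * Mt \<alpha> $ u $ z * ws \<alpha> K z y))"
      by (auto simp: distrib_right sum_distrib_right)
    thus ?thesis by (simp only: sum.distrib)
  qed
  also have "(\<Sum>z\<in>UNIV. \<Sum>u\<in>UNIV. Fm \<alpha> $ x $ u * Mt \<alpha> $ u $ z * ws \<alpha> K z y) =
     (\<Sum>u\<in>UNIV. Fm \<alpha> $ x $ u * ws \<alpha> (Suc K) u y)"
    by (subst sum.swap) (simp add: sum_distrib_left mult.assoc)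
  finally show ?case using Suc by simp
qed

lemma Mt_cons: "Mt \<alpha> $ a $ b = Pt a b * \<alpha> powr w a b" by (rule Mt_entry)

lemma mwP_cons2: "mwP (x # y # r) = Pt x y * mwP (y # r)"
  by (simp add: mwP_def)

lemma ws_list: assumes "0 < \<alpha>"
  shows "ws \<alpha> k x y = (\<Sum>xs\<in>L k x y. mwP xs * \<alpha> powr path_cost w xs)"
proof (induction k arbitrary: x)
  case 0
  have "L 0 x y = (if x = y then {[x]} else {})"
    unfolding L_def by (auto simp: length_Suc_conv)
  then show ?case using assms by (simp add: mwP_def path_cost_def)
next
  case (Suc k)
  have LS: "L (Suc k) x y = (\<Union>z\<in>UNIV. (\<lambda>ys. x # ys) ` L k z y)"
  proof
    show "L (Suc k) x y \<subseteq> (\<Union>z\<in>UNIV. (\<lambda>ys. x # ys) ` L k z y)"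
    proof
      fix xs assume "xs \<in> L (Suc k) x y"
      hence xs: "length xs = Suc (Suc k)" "hd xs = x" "last xs = y" unfolding L_def by auto
      then obtain ys where ys: "xs = x # ys" by (cases xs) auto
      hence "ys \<in> L k (hd ys) y" using xs unfolding L_def by (cases ys) auto
      thus "xs \<in> (\<Union>z\<in>UNIV. (\<lambda>ys. x # ys) ` L k z y)" using ys by blast
    qed
    show "(\<Union>z\<in>UNIV. (\<lambda>ys. x # ys) ` L k z y) \<subseteq> L (Suc k) x y"
      unfolding L_def by auto
  qed
  have "(\<Sum>xs\<in>L (Suc k) x y. mwP xs * \<alpha> powr path_cost w xs) =
     (\<Sum>z\<in>UNIV. \<Sum>xs\<in>(\<lambda>ys. x # ys) ` L k z y. mwP xs * \<alpha> powr path_cost w xs)"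
    unfolding LS by (rule sum.UNION_disjoint) (use finite_L in \<open>auto simp: L_def\<close>)
  also have "\<dots> = (\<Sum>z\<in>UNIV. \<Sum>ys\<in>L k z y. mwP (x # ys) * \<alpha> powr path_cost w (x # ys))"
    by (rule sum.cong[OF refl], subst sum.reindex) (auto simp: inj_on_def)
  also have "\<dots> = (\<Sum>z\<in>UNIV. \<Sum>ys\<in>L k z y. Mt \<alpha> $ x $ z * (mwP ys * \<alpha> powr path_cost w ys))"
  proof (intro sum.cong refl)
    fix z ys assume "ys \<in> L k z y"
    then obtain r where ys: "ys = z # r" unfolding L_def by (cases ys) auto
    show "mwP (x # ys) * \<alpha> powr path_cost w (x # ys) = Mt \<alpha> $ x $ z * (mwP ys * \<alpha> powr path_cost w ys)"
      unfolding ys mwP_cons2 cost_cons2 Mt_entry using assms by (simp add: powr_add)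
  qed
  also have "\<dots> = ws \<alpha> (Suc k) x y"
    by (simp add: Suc.IH sum_distrib_left)
  finally show ?case by simp
qed

lemma Tsum_list: assumes "0 < \<alpha>"
  shows "(\<Sum>k<K. ws \<alpha> k x y) = (\<Sum>xs\<in>LL K x y. mwP xs * \<alpha> powr path_cost w xs)"
proof -
  have "(\<Sum>xs\<in>LL K x y. mwP xs * \<alpha> powr path_cost w xs) =
     (\<Sum>k<K. \<Sum>xs\<in>L k x y. mwP xs * \<alpha> powr path_cost w xs)"
    unfolding LL_def by (rule sum.UNION_disjoint) (use finite_L in \<open>auto simp: L_def\<close>)
  thus ?thesis using ws_list[OF assms] by simp
qed

lemma main_expand: assumes "0 < \<alpha>"
  shows "\<alpha> powr (-D) * (\<Sum>z\<in>UNIV - {t}. (\<Sum>k<K. ws \<alpha> k s m) * (\<Sum>k<K. ws \<alpha> k m z) * Palpha P w \<alpha> z t)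
    = (\<Sum>i\<in>II K m. cc i * \<alpha> powr (ee i - D))"
proof -
  define A where "A xs = mwP xs * \<alpha> powr path_cost w xs" for xs
  have "(\<Sum>z\<in>UNIV - {t}. (\<Sum>k<K. ws \<alpha> k s m) * (\<Sum>k<K. ws \<alpha> k m z) * Palpha P w \<alpha> z t) =
    (\<Sum>z\<in>UNIV - {t}. \<Sum>(xs1, xs2)\<in>LL K s m \<times> LL K m z. A xs1 * A xs2 * Palpha P w \<alpha> z t)"
  proof (intro sum.cong refl)
    fix z
    have "(\<Sum>k<K. ws \<alpha> k s m) * (\<Sum>k<K. ws \<alpha> k m z) * Palpha P w \<alpha> z t =
       (\<Sum>xs1\<in>LL K s m. A xs1) * (\<Sum>xs2\<in>LL K m z. A xs2) * Palpha P w \<alpha> z t"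
      unfolding Tsum_list[OF assms] A_def ..
    also have "\<dots> = (\<Sum>xs1\<in>LL K s m. \<Sum>xs2\<in>LL K m z. A xs1 * A xs2 * Palpha P w \<alpha> z t)"
      unfolding sum_product by (simp add: sum_distrib_right)
    also have "\<dots> = (\<Sum>(xs1, xs2)\<in>LL K s m \<times> LL K m z. A xs1 * A xs2 * Palpha P w \<alpha> z t)"
      by (rule sum.cartesian_product)
    finally show "(\<Sum>k<K. ws \<alpha> k s m) * (\<Sum>k<K. ws \<alpha> k m z) * Palpha P w \<alpha> z t =
       (\<Sum>(xs1, xs2)\<in>LL K s m \<times> LL K m z. A xs1 * A xs2 * Palpha P w \<alpha> z t)" .
  qed
  also have "\<dots> = (\<Sum>(z, p)\<in>II K m. (case p of (xs1, xs2) \<Rightarrow> A xs1 * A xs2 * Palpha P w \<alpha> z t))"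
    unfolding II_def by (rule sum.Sigma) (auto simp: finite_LL)
  finally have "\<alpha> powr (-D) * (\<Sum>z\<in>UNIV - {t}. (\<Sum>k<K. ws \<alpha> k s m) * (\<Sum>k<K. ws \<alpha> k m z) * Palpha P w \<alpha> z t)
     = (\<Sum>i\<in>II K m. \<alpha> powr (-D) * (case i of (z, xs1, xs2) \<Rightarrow> A xs1 * A xs2 * Palpha P w \<alpha> z t))"
    by (simp add: sum_distrib_left case_prod_beta)
  also have "\<dots> = (\<Sum>i\<in>II K m. cc i * \<alpha> powr (ee i - D))"
  proof (intro sum.cong refl)
    fix i :: "'v \<times> 'v list \<times> 'v list"
    obtain z xs1 xs2 where i: "i = (z, xs1, xs2)" by (cases i) auto
    show "\<alpha> powr (-D) * (case i of (z, xs1, xs2) \<Rightarrow> A xs1 * A xs2 * Palpha P w \<alpha> z t) = cc i * \<alpha> powr (ee i - D)"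
    proof -
      have e: "ee i - D = -D + (path_cost w xs1 + (path_cost w xs2 + w z t))" unfolding i by simp
      show ?thesis unfolding e powr_add unfolding i A_def Palpha_def by (simp add: mult_ac)
    qed
  qed
  finally show ?thesis .
qed

end


lemma ev_small: "\<forall>\<^sub>F \<alpha> in at_right (0::real). 0 < \<alpha> \<and> \<alpha> < 1/2"
  using eventually_at_right_real[of 0 "1/2::real"] by (auto elim: eventually_mono)

lemma powr_to0: "(e::real) > 0 \<Longrightarrow> ((\<lambda>\<alpha>. \<alpha> powr e) \<longlongrightarrow> 0) (at_right 0)"
  by (rule tendsto_zero_powrI[of "\<lambda>x. x" _ "\<lambda>_. e" e])
     (use ev_small in \<open>auto elim: eventually_mono\<close>)

lemma null_bound:
  assumes "(e::real) > 0" "\<forall>\<^sub>F \<alpha> in at_right 0. \<bar>f \<alpha>\<bar> \<le> C * \<alpha> powr e"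
  shows "(f \<longlongrightarrow> (0::real)) (at_right 0)"
proof (rule Lim_null_comparison)
  show "\<forall>\<^sub>F \<alpha> in at_right 0. norm (f \<alpha>) \<le> C * \<alpha> powr e" using assms(2) by simp
  show "((\<lambda>\<alpha>. C * \<alpha> powr e) \<longlongrightarrow> 0) (at_right 0)"
    using tendsto_mult[OF tendsto_const powr_to0[OF assms(1)], of C] by simp
qed

lemma exp_sum_lim:
  fixes c e :: "'a \<Rightarrow> real"
  assumes "finite I" "\<forall>i\<in>I. c i \<noteq> 0 \<longrightarrow> D \<le> e i"
  shows "((\<lambda>\<alpha>. \<Sum>i\<in>I. c i * \<alpha> powr (e i - D)) \<longlongrightarrow> (\<Sum>i\<in>{i\<in>I. e i = D}. c i)) (at_right 0)"
proof -
  have "(\<Sum>i\<in>{i\<in>I. e i = D}. c i) = (\<Sum>i\<in>I. if e i = D then c i else 0)"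
    using assms(1) by (rule sum.inter_filter)
  moreover have "((\<lambda>\<alpha>. \<Sum>i\<in>I. c i * \<alpha> powr (e i - D)) \<longlongrightarrow> (\<Sum>i\<in>I. if e i = D then c i else 0)) (at_right 0)"
  proof (rule tendsto_sum)
    fix i assume i: "i \<in> I"
    show "((\<lambda>\<alpha>. c i * \<alpha> powr (e i - D)) \<longlongrightarrow> (if e i = D then c i else 0)) (at_right 0)"
    proof (cases "c i = 0")
      case True thus ?thesis by simp
    next
      case False
      hence ge: "D \<le> e i" using assms(2) i by auto
      show ?thesis
      proof (cases "e i = D")
        case True
        have "\<forall>\<^sub>F \<alpha> in at_right 0. c i = c i * \<alpha> powr (e i - D)"
          using ev_small by eventually_elim (simp add: True)
        thus ?thesis using True by (auto intro: Lim_transform_eventually[OF tendsto_const])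
      next
        case False
        hence "e i - D > 0" using ge by simp
        from tendsto_mult[OF tendsto_const powr_to0[OF this], of "c i"]
        show ?thesis using False by simp
      qed
    qed
  qed
  ultimately show ?thesis by simp
qed

context ctx
begin

lemma Fto_eq: "Fto P w t \<alpha> x y = Fm \<alpha> $ x $ y"
  by (simp add: Fto_def Fm_def Mt_def)

lemma R_bound: assumes "0 < \<alpha>" "\<alpha> \<le> 1/2"
  shows "\<bar>\<Sum>z\<in>UNIV. Fm \<alpha> $ x $ z * ws \<alpha> K z y\<bar> \<le> real CARD('v) * CF * \<alpha> powr (real K * wmin)"
proof -
  have "\<bar>\<Sum>z\<in>UNIV. Fm \<alpha> $ x $ z * ws \<alpha> K z y\<bar> \<le> (\<Sum>z\<in>UNIV. \<bar>Fm \<alpha> $ x $ z * ws \<alpha> K z y\<bar>)"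
    by (rule sum_abs)
  also have "\<dots> \<le> (\<Sum>z\<in>(UNIV::'v set). CF * \<alpha> powr (real K * wmin))"
  proof (rule sum_mono)
    fix z
    have "\<bar>Fm \<alpha> $ x $ z * ws \<alpha> K z y\<bar> = \<bar>Fm \<alpha> $ x $ z\<bar> * ws \<alpha> K z y"
      by (simp add: abs_mult ws_nonneg)
    also have "\<dots> \<le> CF * \<alpha> powr (real K * wmin)"
      using F_bound[OF assms] ws_le[of \<alpha> K z y] assms ws_nonneg F_bound[OF assms, of x x]
      by (intro mult_mono) (auto intro: order_trans[OF abs_ge_zero])
    finally show "\<bar>Fm \<alpha> $ x $ z * ws \<alpha> K z y\<bar> \<le> CF * \<alpha> powr (real K * wmin)" .
  qed
  also have "\<dots> = real CARD('v) * CF * \<alpha> powr (real K * wmin)" by simp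
  finally show ?thesis .
qed

lemma F_lim: "((\<lambda>\<alpha>. Fm \<alpha> $ x $ y) \<longlongrightarrow> (if x = y then 1 else 0)) (at_right 0)"
proof -
  have "((\<lambda>\<alpha>. Fm \<alpha> $ x $ y - (if x = y then 1 else 0)) \<longlongrightarrow> 0) (at_right 0)"
  proof (rule null_bound[OF wmin_pos])
    show "\<forall>\<^sub>F \<alpha> in at_right 0. \<bar>Fm \<alpha> $ x $ y - (if x = y then 1 else 0)\<bar> \<le> (real CARD('v) * CF) * \<alpha> powr wmin"
      using ev_small
    proof eventually_elim
      case (elim \<alpha>)
      have "Fm \<alpha> $ x $ y - (if x = y then 1 else 0) = (\<Sum>z\<in>UNIV. Fm \<alpha> $ x $ z * ws \<alpha> 1 z y)"
        using trunc[of \<alpha> x y 1] elim by simp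
      thus ?case using R_bound[of \<alpha> x 1 y] elim by simp
    qed
  qed
  from tendsto_add[OF this tendsto_const[of "if x = y then 1 else 0"]] show ?thesis by simp
qed

lemma pa_lim: "((\<lambda>\<alpha>. Palpha P w \<alpha> z t) \<longlongrightarrow> 0) (at_right 0)"
proof (cases "(z, t) \<in> E")
  case True
  from tendsto_mult[OF tendsto_const powr_to0[OF w_pos[OF True]], of "P z t"]
  show ?thesis by (simp add: Palpha_def)
next
  case False
  thus ?thesis by (simp add: Palpha_def P_zero)
qed

definition Kb :: nat where "Kb = nat \<lceil>D / wmin\<rceil> + CARD('v) + 1"

lemma Kb_props: "CARD('v) \<le> Kb" "real Kb * wmin > D"
proof -
  show "CARD('v) \<le> Kb" unfolding Kb_def by simp
  have "real Kb \<ge> D / wmin + 1" unfolding Kb_def by linarith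
  hence "real Kb * wmin \<ge> (D / wmin + 1) * wmin" using wmin_pos by (intro mult_right_mono) auto
  also have "(D / wmin + 1) * wmin = D + wmin" using wmin_pos by (simp add: field_simps)
  finally show "real Kb * wmin > D" using wmin_pos by simp
qed

definition Tt where "Tt \<alpha> x y = (\<Sum>k<Kb. ws \<alpha> k x y)"
definition Rr where "Rr \<alpha> x y = (\<Sum>z\<in>UNIV. Fm \<alpha> $ x $ z * ws \<alpha> Kb z y)"

lemma R_scaled: "((\<lambda>\<alpha>. \<alpha> powr (-D) * Rr \<alpha> x y) \<longlongrightarrow> 0) (at_right 0)"
proof (rule null_bound)
  show "real Kb * wmin - D > 0" using Kb_props by simp
  show "\<forall>\<^sub>F \<alpha> in at_right 0. \<bar>\<alpha> powr (-D) * Rr \<alpha> x y\<bar> \<le> (real CARD('v) * CF) * \<alpha> powr (real Kb * wmin - D)"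
    using ev_small
  proof eventually_elim
    case (elim \<alpha>)
    have "\<bar>\<alpha> powr (-D) * Rr \<alpha> x y\<bar> = \<alpha> powr (-D) * \<bar>Rr \<alpha> x y\<bar>" by (simp add: abs_mult)
    also have "\<dots> \<le> \<alpha> powr (-D) * (real CARD('v) * CF * \<alpha> powr (real Kb * wmin))"
      unfolding Rr_def using R_bound[of \<alpha> x Kb y] elim by (intro mult_left_mono) auto
    also have "\<dots> = (real CARD('v) * CF) * \<alpha> powr (real Kb * wmin - D)"
      using elim by (simp add: powr_diff powr_minus field_simps)
    finally show ?case .
  qed
qed

lemma R_lim: "((\<lambda>\<alpha>. Rr \<alpha> x y) \<longlongrightarrow> 0) (at_right 0)"
proof -
  have "((\<lambda>\<alpha>. \<alpha> powr D * (\<alpha> powr (-D) * Rr \<alpha> x y)) \<longlongrightarrow> 0 * 0) (at_right 0)"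
    by (intro tendsto_mult powr_to0 D_pos R_scaled)
  moreover have "\<forall>\<^sub>F \<alpha> in at_right 0. \<alpha> powr D * (\<alpha> powr (-D) * Rr \<alpha> x y) = Rr \<alpha> x y"
    using ev_small by eventually_elim (simp add: powr_minus)
  ultimately show ?thesis by (auto intro: Lim_transform_eventually)
qed

lemma T_lim: "((\<lambda>\<alpha>. Tt \<alpha> x y) \<longlongrightarrow> (if x = y then 1 else 0)) (at_right 0)"
proof -
  have "((\<lambda>\<alpha>. Fm \<alpha> $ x $ y - Rr \<alpha> x y) \<longlongrightarrow> (if x = y then 1 else 0) - 0) (at_right 0)"
    by (intro tendsto_diff F_lim R_lim)
  moreover have "\<forall>\<^sub>F \<alpha> in at_right 0. Fm \<alpha> $ x $ y - Rr \<alpha> x y = Tt \<alpha> x y"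
    using ev_small
  proof eventually_elim
    case (elim \<alpha>)
    hence "0 < \<alpha>" "\<alpha> < 1" by auto
    from trunc[OF this, of x y Kb] show ?case by (simp add: Tt_def Rr_def)
  qed
  ultimately show ?thesis by (auto intro: Lim_transform_eventually)
qed

definition Am :: "'v \<Rightarrow> real" where
  "Am m = (\<Sum>p\<in>{p. shortest_path E w s t p \<and> m \<in> set p}. pwt p)"

definition G :: "'v \<Rightarrow> real \<Rightarrow> real" where
  "G m \<alpha> = \<alpha> powr (-D) * Fto P w t \<alpha> s m * Qabs P w t \<alpha> m"

lemma G_lim: assumes m: "m \<noteq> t" shows "(G m \<longlongrightarrow> Am m) (at_right 0)"
proof -
  define pa where "pa \<alpha> z = Palpha P w \<alpha> z t" for \<alpha> z
  define main where "main \<alpha> = \<alpha> powr (-D) * (\<Sum>z\<in>UNIV - {t}. Tt \<alpha> s m * Tt \<alpha> m z * pa \<alpha> z)" for \<alpha>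
  define err where "err \<alpha> = (\<Sum>z\<in>UNIV - {t}. (\<alpha> powr (-D) * Rr \<alpha> s m) * Fm \<alpha> $ m $ z * pa \<alpha> z
      + Tt \<alpha> s m * (\<alpha> powr (-D) * Rr \<alpha> m z) * pa \<alpha> z)" for \<alpha>
  have ev: "\<forall>\<^sub>F \<alpha> in at_right 0. main \<alpha> + err \<alpha> = G m \<alpha>"
    using ev_small
  proof eventually_elim
    case (elim \<alpha>)
    have F: "Fm \<alpha> $ x $ y = Tt \<alpha> x y + Rr \<alpha> x y" for x y
      using trunc[of \<alpha> x y Kb] elim unfolding Tt_def Rr_def by simp
    have "G m \<alpha> = (\<Sum>z\<in>UNIV - {t}. \<alpha> powr (-D) * (Fm \<alpha> $ s $ m * Fm \<alpha> $ m $ z * pa \<alpha> z))"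
      unfolding G_def Qabs_def Fto_eq pa_def by (simp add: sum_distrib_left mult_ac)
    also have "\<dots> = (\<Sum>z\<in>UNIV - {t}. \<alpha> powr (-D) * (Tt \<alpha> s m * Tt \<alpha> m z * pa \<alpha> z) +
       ((\<alpha> powr (-D) * Rr \<alpha> s m) * Fm \<alpha> $ m $ z * pa \<alpha> z
      + Tt \<alpha> s m * (\<alpha> powr (-D) * Rr \<alpha> m z) * pa \<alpha> z))"
      by (intro sum.cong refl) (simp add: F[of s m] F[of m] algebra_simps)
    also have "\<dots> = main \<alpha> + err \<alpha>"
      unfolding main_def err_def by (simp add: sum.distrib sum_distrib_left)
    finally show ?case by simp
  qed
  have "(main \<longlongrightarrow> (\<Sum>i\<in>{i\<in>II Kb m. ee i = D}. cc i)) (at_right 0)"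
  proof -
    have "\<forall>\<^sub>F \<alpha> in at_right 0. (\<Sum>i\<in>II Kb m. cc i * \<alpha> powr (ee i - D)) = main \<alpha>"
      using ev_small by eventually_elim (simp add: main_def main_expand Tt_def pa_def)
    moreover have "((\<lambda>\<alpha>. \<Sum>i\<in>II Kb m. cc i * \<alpha> powr (ee i - D)) \<longlongrightarrow> (\<Sum>i\<in>{i\<in>II Kb m. ee i = D}. cc i)) (at_right 0)"
      by (rule exp_sum_lim) (auto intro: finite_II ee_ge)
    ultimately show ?thesis by (auto intro: Lim_transform_eventually)
  qed
  hence mainl: "(main \<longlongrightarrow> Am m) (at_right 0)" using comb[OF m Kb_props(1)] unfolding Am_def by simp
  have "(err \<longlongrightarrow> (\<Sum>z\<in>UNIV - {t}. 0 * (if m = z then 1 else 0) * 0 + (if s = m then 1 else 0) * 0 * 0)) (at_right 0)"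
    unfolding err_def pa_def
    by (intro tendsto_sum tendsto_add tendsto_mult R_scaled F_lim T_lim pa_lim)
  hence "(err \<longlongrightarrow> 0) (at_right 0)" by simp
  from tendsto_add[OF mainl this] have "((\<lambda>\<alpha>. main \<alpha> + err \<alpha>) \<longlongrightarrow> Am m) (at_right 0)" by simp
  thus ?thesis using ev by (rule Lim_transform_eventually)
qed

lemma Am_s: "Am s = (\<Sum>p\<in>{p. shortest_path E w s t p}. pwt p)"
proof -
  have "{p. shortest_path E w s t p \<and> s \<in> set p} = {p. shortest_path E w s t p}"
    by (auto simp: shortest_path_def is_path_def)
  thus ?thesis unfolding Am_def by simp
qed

lemma pwt_sp_pos: "shortest_path E w s t p \<Longrightarrow> pwt p > 0"
  by (intro pwt_pos) (auto simp: shortest_path_def dest!: is_path_W simp: W_def)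

lemma finite_sp: "finite {p. shortest_path E w s t p}"
  by (rule finite_subset[OF _ finite_paths[of s t]]) (auto simp: shortest_path_def)

lemma Am_s_pos: "Am s > 0"
proof -
  obtain p where "is_path E s t p" "path_cost w p = D" using D_ex by blast
  hence "shortest_path E w s t p" using sp_iff by auto
  thus ?thesis unfolding Am_s using finite_sp pwt_sp_pos
    by (intro sum_pos) auto
qed

lemma Favoid_lim: assumes m: "m \<noteq> t"
  shows "((\<lambda>\<alpha>. Favoid P w t \<alpha> s m) \<longlongrightarrow> Am m / Am s) (at_right 0)"
proof -
  have fss: "((\<lambda>\<alpha>. Fto P w t \<alpha> s s) \<longlongrightarrow> 1) (at_right 0)"
    using F_lim[of s s] unfolding Fto_eq by simp
  have "((\<lambda>\<alpha>. G m \<alpha> / (G s \<alpha> / Fto P w t \<alpha> s s)) \<longlongrightarrow> Am m / (Am s / 1)) (at_right 0)"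
    using Am_s_pos by (intro tendsto_divide G_lim m st fss) auto
  moreover have "\<forall>\<^sub>F \<alpha> in at_right 0. Fto P w t \<alpha> s s \<noteq> 0"
    using fss by (rule tendsto_imp_eventually_ne) simp
  hence "\<forall>\<^sub>F \<alpha> in at_right 0. G m \<alpha> / (G s \<alpha> / Fto P w t \<alpha> s s) = Favoid P w t \<alpha> s m"
    using ev_small
  proof eventually_elim
    case (elim \<alpha>)
    have pz: "\<alpha> powr (-D) \<noteq> 0" using elim by simp
    have "G s \<alpha> / Fto P w t \<alpha> s s = \<alpha> powr (-D) * Qabs P w t \<alpha> s"
      unfolding G_def using elim by simp
    thus ?case unfolding Favoid_def G_def using pz by simp
  qed
  ultimately show ?thesis by (auto intro: Lim_transform_eventually)
qed

end


context ctx
begin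

lemma fin_spQ: "finite {p. shortest_path E w s t p \<and> Q p}"
  by (rule finite_subset[OF _ finite_sp]) blast

lemma sp_m_split:
  "Am s = Am m + (\<Sum>p\<in>{p. shortest_path E w s t p \<and> m \<notin> set p}. pwt p)"
proof -
  have u: "{p. shortest_path E w s t p} = {p. shortest_path E w s t p \<and> m \<in> set p} \<union> {p. shortest_path E w s t p \<and> m \<notin> set p}"
    by blast
  have "sum pwt ({p. shortest_path E w s t p \<and> m \<in> set p} \<union> {p. shortest_path E w s t p \<and> m \<notin> set p}) =
     sum pwt {p. shortest_path E w s t p \<and> m \<in> set p} + sum pwt {p. shortest_path E w s t p \<and> m \<notin> set p}"
    by (rule sum.union_disjoint) (rule fin_spQ, rule fin_spQ, blast)
  moreover have "Am s = sum pwt ({p. shortest_path E w s t p \<and> m \<in> set p} \<union> {p. shortest_path E w s t p \<and> m \<notin> set p})"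
    by (subst u[symmetric]) (rule Am_s)
  ultimately show ?thesis unfolding Am_def[of m] by simp
qed

lemma sum_sp_pos:
  assumes "shortest_path E w s t xs" "Q xs"
  shows "(\<Sum>p\<in>{p. shortest_path E w s t p \<and> Q p}. pwt p) > 0"
proof (rule sum_pos2[OF fin_spQ])
  show "xs \<in> {p. shortest_path E w s t p \<and> Q p}" using assms by blast
  show "0 < pwt xs" using pwt_sp_pos[OF assms(1)] .
  fix p assume "p \<in> {p. shortest_path E w s t p \<and> Q p}"
  thus "0 \<le> pwt p" using pwt_sp_pos[of p] by simp
qed

lemma sum_sp_nonneg: "(\<Sum>p\<in>{p. shortest_path E w s t p \<and> Q p}. pwt p) \<ge> 0"
proof (rule sum_nonneg)
  fix p assume "p \<in> {p. shortest_path E w s t p \<and> Q p}"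
  thus "0 \<le> pwt p" using pwt_sp_pos[of p] by simp
qed

lemma sum_sp_zero:
  assumes "\<not> (\<exists>xs. shortest_path E w s t xs \<and> Q xs)"
  shows "(\<Sum>p\<in>{p. shortest_path E w s t p \<and> Q p}. pwt p) = 0"
proof -
  have "{p. shortest_path E w s t p \<and> Q p} = {}" using assms by blast
  thus ?thesis by (metis sum.empty)
qed

lemma lim_unique:
  assumes "((\<lambda>\<alpha>. Favoid P w t \<alpha> s m) \<longlongrightarrow> Lv) (at_right 0)" "m \<noteq> t"
  shows "Lv = Am m / Am s"
  using tendsto_unique[OF trivial_limit_at_right_real assms(1) Favoid_lim[OF assms(2)]] .

lemma some_iff: "Am m > 0 \<longleftrightarrow> (\<exists>xs. shortest_path E w s t xs \<and> m \<in> set xs)"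
proof
  assume "Am m > 0"
  thus "\<exists>xs. shortest_path E w s t xs \<and> m \<in> set xs"
    using sum_sp_zero[of "\<lambda>p. m \<in> set p"] unfolding Am_def by force
next
  assume "\<exists>xs. shortest_path E w s t xs \<and> m \<in> set xs"
  then obtain xs where "shortest_path E w s t xs" "m \<in> set xs" by blast
  from sum_sp_pos[of xs "\<lambda>p. m \<in> set p", OF this] show "Am m > 0" unfolding Am_def .
qed

lemma notall_iff: "Am m < Am s \<longleftrightarrow> (\<exists>xs. shortest_path E w s t xs \<and> m \<notin> set xs)"
proof
  assume a: "Am m < Am s"
  show "\<exists>xs. shortest_path E w s t xs \<and> m \<notin> set xs"
  proof (rule ccontr)
    assume "\<not> (\<exists>xs. shortest_path E w s t xs \<and> m \<notin> set xs)"
    from sum_sp_zero[of "\<lambda>p. m \<notin> set p", OF this] have "Am s = Am m" using sp_m_split[of m] by simp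
    thus False using a by simp
  qed
next
  assume "\<exists>xs. shortest_path E w s t xs \<and> m \<notin> set xs"
  then obtain xs where "shortest_path E w s t xs" "m \<notin> set xs" by blast
  from sum_sp_pos[of xs "\<lambda>p. m \<notin> set p", OF this] show "Am m < Am s" using sp_m_split[of m] by simp
qed

lemma Am_nonneg: "Am m \<ge> 0"
  unfolding Am_def using sum_sp_nonneg[of "\<lambda>p. m \<in> set p"] by simp

end

theorem mainTheorem4:
  fixes E :: "('v::finite \<times> 'v) set"
    and P w :: "'v \<Rightarrow> 'v \<Rightarrow> real"
    and s t :: 'v
  assumes P_nonneg: "\<And>i j. P i j \<ge> 0"
    and P_stoch: "\<And>i. (\<Sum>j\<in>UNIV. P i j) = 1"
    and P_edge: "\<And>i j. P i j > 0 \<longleftrightarrow> (i, j) \<in> E"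
    and w_pos: "\<And>i j. (i, j) \<in> E \<Longrightarrow> w i j > 0"
    and st: "s \<noteq> t"
    and reach: "\<exists>xs. is_path E s t xs"
  shows
    "(\<forall>m. m \<noteq> t \<longrightarrow> ((\<lambda>\<alpha>. Favoid P w t \<alpha> s m) \<longlongrightarrow> 0) (at_right 0) \<longrightarrow>
        (\<forall>xs. shortest_path E w s t xs \<longrightarrow> m \<notin> set xs))
   \<and> (\<forall>m. m \<noteq> t \<longrightarrow> ((\<lambda>\<alpha>. Favoid P w t \<alpha> s m) \<longlongrightarrow> 1) (at_right 0) \<longrightarrow>
        (\<forall>xs. shortest_path E w s t xs \<longrightarrow> m \<in> set xs))
   \<and> (\<forall>m L. m \<noteq> t \<longrightarrow> ((\<lambda>\<alpha>. Favoid P w t \<alpha> s m) \<longlongrightarrow> L) (at_right 0) \<longrightarrow> 0 < L \<longrightarrow> L < 1 \<longrightarrow>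
        (\<exists>xs. shortest_path E w s t xs \<and> m \<in> set xs) \<and>
        (\<exists>xs. shortest_path E w s t xs \<and> m \<notin> set xs))
   \<and> ((\<exists>xs ys. shortest_path E w s t xs \<and> shortest_path E w s t ys \<and> xs \<noteq> ys) \<longleftrightarrow>
      (\<exists>m L. m \<noteq> t \<and> ((\<lambda>\<alpha>. Favoid P w t \<alpha> s m) \<longlongrightarrow> L) (at_right 0) \<and> 0 < L \<and> L < 1))"
proof -
  interpret ctx E P w s t
    by unfold_locales (use P_nonneg P_stoch P_edge w_pos st reach in auto)
  have As: "Am s > 0" by (rule Am_s_pos)
  have c: "(\<exists>xs. shortest_path E w s t xs \<and> m \<in> set xs) \<and> (\<exists>xs. shortest_path E w s t xs \<and> m \<notin> set xs)"
    if "m \<noteq> t" "((\<lambda>\<alpha>. Favoid P w t \<alpha> s m) \<longlongrightarrow> Lv) (at_right 0)" "0 < Lv" "Lv < 1" for m Lv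
  proof -
    have Lv: "Lv = Am m / Am s" using lim_unique[OF that(2,1)] .
    have "Am m > 0" using that(3) As Lv by (simp add: zero_less_divide_iff)
    moreover have "Am m < Am s" using that(4) As Lv by (simp add: divide_less_eq)
    ultimately show ?thesis using some_iff[of m] notall_iff[of m] by blast
  qed
  show ?thesis
  proof (intro conjI allI impI iffI)
    fix m xs assume m: "m \<noteq> t" and l: "((\<lambda>\<alpha>. Favoid P w t \<alpha> s m) \<longlongrightarrow> 0) (at_right 0)"
      and xs: "shortest_path E w s t xs"
    have "Am m / Am s = 0" using lim_unique[OF l m] by simp
    hence "Am m = 0" using As by simp
    thus "m \<notin> set xs" using some_iff[of m] xs by auto
  next
    fix m xs assume m: "m \<noteq> t" and l: "((\<lambda>\<alpha>. Favoid P w t \<alpha> s m) \<longlongrightarrow> 1) (at_right 0)"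
      and xs: "shortest_path E w s t xs"
    have "Am m / Am s = 1" using lim_unique[OF l m] by simp
    hence "Am m = Am s" using As by simp
    thus "m \<in> set xs" using notall_iff[of m] xs by auto
  next
    fix m Lv assume "m \<noteq> t" "((\<lambda>\<alpha>. Favoid P w t \<alpha> s m) \<longlongrightarrow> Lv) (at_right 0)" "0 < Lv" "Lv < 1"
    thus "\<exists>xs. shortest_path E w s t xs \<and> m \<in> set xs" using c by blast
  next
    fix m Lv assume "m \<noteq> t" "((\<lambda>\<alpha>. Favoid P w t \<alpha> s m) \<longlongrightarrow> Lv) (at_right 0)" "0 < Lv" "Lv < 1"
    thus "\<exists>xs. shortest_path E w s t xs \<and> m \<notin> set xs" using c by blast
  next
    assume "\<exists>xs ys. shortest_path E w s t xs \<and> shortest_path E w s t ys \<and> xs \<noteq> ys"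
    then obtain xs ys where xy: "shortest_path E w s t xs" "shortest_path E w s t ys" "xs \<noteq> ys" by blast
    hence "set xs \<noteq> set ys" using sp_same_set by blast
    then obtain m where m: "(m \<in> set xs \<and> m \<notin> set ys) \<or> (m \<in> set ys \<and> m \<notin> set xs)" by blast
    have "t \<in> set xs" "t \<in> set ys" using xy unfolding shortest_path_def is_path_def
      by (metis last_in_set)+
    hence mt: "m \<noteq> t" using m by auto
    have "Am m > 0" "Am m < Am s" using some_iff[of m] notall_iff[of m] m xy by blast+
    hence "0 < Am m / Am s" "Am m / Am s < 1" using As by (auto simp: divide_less_eq)
    thus "\<exists>m Lv. m \<noteq> t \<and> ((\<lambda>\<alpha>. Favoid P w t \<alpha> s m) \<longlongrightarrow> Lv) (at_right 0) \<and> 0 < Lv \<and> Lv < 1"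
      using Favoid_lim[OF mt] mt by blast
  next
    assume "\<exists>m Lv. m \<noteq> t \<and> ((\<lambda>\<alpha>. Favoid P w t \<alpha> s m) \<longlongrightarrow> Lv) (at_right 0) \<and> 0 < Lv \<and> Lv < 1"
    then obtain m Lv where "m \<noteq> t" "((\<lambda>\<alpha>. Favoid P w t \<alpha> s m) \<longlongrightarrow> Lv) (at_right 0)" "0 < Lv" "Lv < 1" by blast
    from c[OF this] obtain xs ys where "shortest_path E w s t xs" "m \<in> set xs"
      "shortest_path E w s t ys" "m \<notin> set ys" by blast
    thus "\<exists>xs ys. shortest_path E w s t xs \<and> shortest_path E w s t ys \<and> xs \<noteq> ys" by blast
  qed
qed



end
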